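(* Let $\boldsymbol H:\mathbb T^N\to\mathbb T^N$ satisfy Assumptions (H1) and (H2), let $N$ be sufficiently large, fix $i\in[1,N]$, let $\boldsymbol\Phi_i$ be the diffeomorphism described below, and define $G_i(y_i;\hat{\boldsymbol y}_i):=H_i(\boldsymbol\Phi_i(y_i;\hat{\boldsymbol y}_i))$. Then there is $\mathcal K_\#$ depending only on $E,\kappa,K$ such that $$d_{C^2}\big(G_i(\cdot;\hat{\boldsymbol x}_i),\,H_i(\cdot;\hat{\boldsymbol x}_i)\big)\le\mathcal K_\#N^{-1}\qquad\forall\hat{\boldsymbol x}_i\in\mathbb T^{N-1}.$$
   Context: $\mathbb T=\mathbb R/\mathbb Z$; derivatives via lifts; $d_{C^2}$ between circle maps is the max of sup-distances of lifts and of their first two derivatives. $\boldsymbol x=(x_i;\hat{\boldsymbol x}_i)$; $H_i$ is the $i$-th component of $\boldsymbol H$, $\hat{\boldsymbol H}_i$ the others. Assumption (H1), datum $(E,\kappa)$, $\kappa-E>1$: $\boldsymbol H\in C^1$, $|\partial_iH_i|>\kappa$, $|\partial_jH_i|<EN^{-1}$ for $j\ne i$. Assumption (H2), datum $(E,K)$: $\boldsymbol H\in C^3$, $|\partial_i^2H_i|\le K$, $|\partial_k\partial_jH_i|\le EN^{-1}$ if $j\ne i$ and $\le EN^{-2}$ if $i,j,k$ distinct, and for distinct $\ell,j,k$: $|\partial_\ell\partial_j^2H_j|\le EN^{-1}$, $|\partial_\ell\partial_k\partial_jH_j|\le EN^{-2}$. Under (H1), for $N$ large, there is a diffeomorphism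 $\boldsymbol\Phi_i:\mathbb T\times\mathbb T^{N-1}\to\mathbb T^N$ with $\Phi_{i,i}(y_i;\hat{\boldsymbol y}_i)=y_i$ and $\hat{\boldsymbol H}_i(\boldsymbol\Phi_i(y_i;\hat{\boldsymbol y}_i))=\hat{\boldsymbol H}_i(0;\hat{\boldsymbol y}_i)$, whose images of the circles $\mathbb T\times\{\hat{\boldsymbol y}_i\}$ are the connected components of the preimages $\boldsymbol H^{-1}(\{(x;\hat{\boldsymbol x}_i):x\in\mathbb T\})$, each homotopic to $\mathbb T\times\{\hat{\boldsymbol y}_i\}$; under (H2) it satisfies $|\partial_i\Phi_{i,m}|_\infty\le\mathcal K_\#N^{-1}$ for $m\ne i$. *)

theory Defs
  imports "HOL-Analysis.Analysis"
begin

text \<open>Points of R^N are encoded as functions nat => real; only the coordinates j < N matter.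
  Maps of the torus T^N are encoded by their lifts R^N -> R^N.\<close>

definition same_upto :: "nat \<Rightarrow> (nat \<Rightarrow> real) \<Rightarrow> (nat \<Rightarrow> real) \<Rightarrow> bool" where
  "same_upto N x y \<longleftrightarrow> (\<forall>j<N. x j = y j)"

definition pd :: "nat \<Rightarrow> ((nat \<Rightarrow> real) \<Rightarrow> real) \<Rightarrow> (nat \<Rightarrow> real) \<Rightarrow> real" where
  "pd j f = (\<lambda>x. deriv (\<lambda>t. f (x(j := t))) (x j))"

definition Ck :: "nat \<Rightarrow> nat \<Rightarrow> ((nat \<Rightarrow> real) \<Rightarrow> real) \<Rightarrow> bool" where
  "Ck N k f \<longleftrightarrow>
     (\<forall>x y. same_upto N x y \<longrightarrow> f x = f y) \<and>
     (\<forall>js. length js \<le> k \<and> set js \<subseteq> {..<N} \<longrightarrow>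
        continuous_on UNIV (foldr pd js f) \<and>
        (length js < k \<longrightarrow>
           (\<forall>j<N. \<forall>x. (\<lambda>t. foldr pd js f (x(j := t))) differentiable (at (x j)))))"

text \<open>F : R^N -> R^N is (the lift of) a C^k map of the torus T^N = R^N / Z^N.\<close>
definition torus_map_lift :: "nat \<Rightarrow> nat \<Rightarrow> ((nat \<Rightarrow> real) \<Rightarrow> (nat \<Rightarrow> real)) \<Rightarrow> bool" where
  "torus_map_lift N k F \<longleftrightarrow>
     (\<forall>m<N. Ck N k (\<lambda>x. F x m)) \<and>
     (\<forall>x j m. j < N \<and> m < N \<longrightarrow> F (x(j := x j + 1)) m - F x m \<in> \<int>)"

definition H1 :: "nat \<Rightarrow> real \<Rightarrow> real \<Rightarrow> ((nat \<Rightarrow> real) \<Rightarrow> (nat \<Rightarrow> real)) \<Rightarrow> bool" where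
  "H1 N E \<kappa> F \<longleftrightarrow>
     torus_map_lift N 1 F \<and>
     (\<forall>i<N. \<forall>x. \<bar>pd i (\<lambda>z. F z i) x\<bar> > \<kappa>) \<and>
     (\<forall>i<N. \<forall>j<N. \<forall>x. j \<noteq> i \<longrightarrow> \<bar>pd j (\<lambda>z. F z i) x\<bar> < E / real N)"

definition H2 :: "nat \<Rightarrow> real \<Rightarrow> real \<Rightarrow> ((nat \<Rightarrow> real) \<Rightarrow> (nat \<Rightarrow> real)) \<Rightarrow> bool" where
  "H2 N E K F \<longleftrightarrow>
     torus_map_lift N 3 F \<and>
     (\<forall>i<N. \<forall>x. \<bar>pd i (pd i (\<lambda>z. F z i)) x\<bar> \<le> K) \<and>
     (\<forall>i<N. \<forall>j<N. \<forall>k<N. \<forall>x. j \<noteq> i \<longrightarrow>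
        \<bar>pd k (pd j (\<lambda>z. F z i)) x\<bar> \<le> E / real N) \<and>
     (\<forall>i<N. \<forall>j<N. \<forall>k<N. \<forall>x. i \<noteq> j \<and> i \<noteq> k \<and> j \<noteq> k \<longrightarrow>
        \<bar>pd k (pd j (\<lambda>z. F z i)) x\<bar> \<le> E / (real N)\<^sup>2) \<and>
     (\<forall>l<N. \<forall>j<N. \<forall>k<N. \<forall>x. l \<noteq> j \<and> l \<noteq> k \<and> j \<noteq> k \<longrightarrow>
        \<bar>pd l (pd j (pd j (\<lambda>z. F z j))) x\<bar> \<le> E / real N \<and>
        \<bar>pd l (pd k (pd j (\<lambda>z. F z j))) x\<bar> \<le> E / (real N)\<^sup>2)"

text \<open>P is the lift of the diffeomorphism Phi_i: in the argument y, the coordinate y i plays the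
  role of y_i and the other coordinates that of hat y_i.\<close>
definition Phi_lift :: "nat \<Rightarrow> ((nat \<Rightarrow> real) \<Rightarrow> (nat \<Rightarrow> real)) \<Rightarrow> nat \<Rightarrow>
    ((nat \<Rightarrow> real) \<Rightarrow> (nat \<Rightarrow> real)) \<Rightarrow> bool" where
  "Phi_lift N F i P \<longleftrightarrow>
     torus_map_lift N 2 P \<and>
     (\<forall>y. P y i = y i) \<and>
     (\<forall>y. same_upto N (P (y(i := 0))) (y(i := 0))) \<and>
     (\<forall>y m. m < N \<and> m \<noteq> i \<longrightarrow> F (P y) m = F (y(i := 0)) m)"

text \<open>C^2 distance between two circle maps, given by lifts g and h (independent of the lifts
  chosen: the C^0 part is minimised over integer shifts). Value in ereal (may be infinite).\<close>
definition dC2 :: "(real \<Rightarrow> real) \<Rightarrow> (real \<Rightarrow> real) \<Rightarrow> ereal" where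
  "dC2 g h = (INF k\<in>(\<int>::real set). SUP t\<in>(UNIV::real set).
      ereal (max \<bar>g t - h t - k\<bar>
             (max \<bar>deriv g t - deriv h t\<bar> \<bar>deriv (deriv g) t - deriv (deriv h) t\<bar>)))"

end

theory Submission
  imports Defs
begin


lemma pd_upd: "pd j f (z(j:=s)) = deriv (\<lambda>t. f (z(j:=t))) s"
  by (simp add: pd_def)

lemma pdD:
  assumes "\<forall>z. (\<lambda>t. f (z(j:=t))) differentiable (at (z j))"
  shows "((\<lambda>t. f (z(j:=t))) has_real_derivative pd j f (z(j:=s))) (at s)"
proof -
  have "(\<lambda>t. f ((z(j:=s))(j:=t))) differentiable (at ((z(j:=s)) j))" using assms by blast
  hence "(\<lambda>t. f (z(j:=t))) differentiable (at s)" by simp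
  thus ?thesis by (simp add: pd_upd DERIV_deriv_iff_real_differentiable)
qed

lemma mvt_bound:
  fixes g :: "real \<Rightarrow> real"
  assumes d: "\<And>s. (g has_real_derivative g' s) (at s)" and b: "\<And>s. \<bar>g' s\<bar> \<le> B"
  shows "\<bar>g b - g a\<bar> \<le> B * \<bar>b - a\<bar>"
proof -
  have B0: "B \<ge> 0" using b[of 0] by linarith
  consider "a < b" | "a = b" | "b < a" by linarith
  then show ?thesis
  proof cases
    case 1
    then obtain z where "g b - g a = (b - a) * g' z" using MVT2[of a b g g'] d by blast
    then have "\<bar>g b - g a\<bar> = \<bar>b - a\<bar> * \<bar>g' z\<bar>" by (simp add: abs_mult)
    also have "\<dots> \<le> \<bar>b - a\<bar> * B" by (rule mult_left_mono[OF b]) simp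
    finally show ?thesis by (simp add: mult.commute)
  next
    case 2 then show ?thesis by simp
  next
    case 3
    then obtain z where "g a - g b = (a - b) * g' z" using MVT2[of b a g g'] d by blast
    then have "\<bar>g b - g a\<bar> = \<bar>b - a\<bar> * \<bar>g' z\<bar>" by (simp add: abs_mult abs_minus_commute)
    also have "\<dots> \<le> \<bar>b - a\<bar> * B" by (rule mult_left_mono[OF b]) simp
    finally show ?thesis by (simp add: mult.commute)
  qed
qed

definition C1 :: "nat \<Rightarrow> ((nat \<Rightarrow> real) \<Rightarrow> real) \<Rightarrow> bool" where
  "C1 N f \<longleftrightarrow> (\<forall>x y. same_upto N x y \<longrightarrow> f x = f y) \<and>
     (\<forall>j<N. continuous_on UNIV (pd j f)) \<and>
     (\<forall>j<N. \<forall>x. (\<lambda>t. f (x(j := t))) differentiable (at (x j)))"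

lemma pd_dep:
  assumes "\<forall>x y. same_upto N x y \<longrightarrow> f x = f y" "j < N" "same_upto N x y"
  shows "pd j f x = pd j f y"
proof -
  have "x j = y j" using assms unfolding same_upto_def by auto
  moreover have "(\<lambda>t. f (x(j:=t))) = (\<lambda>t. f (y(j:=t)))"
    using assms unfolding same_upto_def by (auto intro!: ext)
  ultimately show ?thesis by (simp add: pd_def)
qed

lemma foldr_dep:
  assumes "\<forall>x y. same_upto N x y \<longrightarrow> f x = f y" "set js \<subseteq> {..<N}"
  shows "\<forall>x y. same_upto N x y \<longrightarrow> foldr pd js f x = foldr pd js f y"
  using assms(2)
proof (induction js)
  case Nil then show ?case using assms(1) by simp
next
  case (Cons j js)
  then show ?case using pd_dep[of N "foldr pd js f" j] by auto
qed

lemma Ck_C1: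
  assumes "Ck N k f" "length js < k" "set js \<subseteq> {..<N}"
  shows "C1 N (foldr pd js f)"
  unfolding C1_def
proof (intro conjI allI impI)
  show "\<And>x y. same_upto N x y \<Longrightarrow> foldr pd js f x = foldr pd js f y"
    using foldr_dep[of N f js] assms unfolding Ck_def by blast
next
  fix j assume j: "j < N"
  have "continuous_on UNIV (foldr pd (j # js) f)"
    using assms j unfolding Ck_def by (metis Suc_leI length_Cons list.set(2) insert_subset lessThan_iff)
  then show "continuous_on UNIV (pd j (foldr pd js f))" by simp
next
  fix j x assume j: "j < N"
  show "(\<lambda>t. foldr pd js f (x(j := t))) differentiable (at (x j))"
    using assms j unfolding Ck_def by (meson less_imp_le)
qed

lemma C1_pd: "Ck N k f \<Longrightarrow> length js < k \<Longrightarrow> set js \<subseteq> {..<N} \<Longrightarrow> foldr pd js f = g \<Longrightarrow> C1 N g"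
  using Ck_C1 by blast

lemma C1_D:
  assumes "C1 N f" "j < N"
  shows "((\<lambda>t. f (z(j:=t))) has_real_derivative pd j f (z(j:=s))) (at s)"
  using assms pdD[of f j] unfolding C1_def by blast

lemma TM:
  assumes f: "C1 N f"
    and B: "\<And>j u. j < N \<Longrightarrow> z j \<noteq> w j \<Longrightarrow> \<bar>pd j f u\<bar> \<le> B j"
  shows "\<bar>f z - f w\<bar> \<le> (\<Sum>j<N. B j * \<bar>z j - w j\<bar>)"
proof -
  define u where "u n = (\<lambda>j. if j < n then z j else w j)" for n
  have step: "\<bar>f (u (Suc n)) - f (u n)\<bar> \<le> B n * \<bar>z n - w n\<bar>" if n: "n < N" for n
  proof (cases "z n = w n")
    case True
    then have "u (Suc n) = u n" unfolding u_def by (auto intro!: ext simp: less_Suc_eq)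
    then show ?thesis using True by simp
  next
    case False
    have e1: "u (Suc n) = (u n)(n := z n)" and e2: "u n = (u n)(n := w n)"
      unfolding u_def by (auto intro!: ext)
    have "\<bar>f ((u n)(n := z n)) - f ((u n)(n := w n))\<bar> \<le> B n * \<bar>z n - w n\<bar>"
      by (rule mvt_bound[of "\<lambda>t. f ((u n)(n:=t))" "\<lambda>s. pd n f ((u n)(n:=s))"])
         (use C1_D[OF f n] B[OF n False] in auto)
    then show ?thesis using e1 e2 by metis
  qed
  have "\<bar>f (u n) - f w\<bar> \<le> (\<Sum>j<n. B j * \<bar>z j - w j\<bar>)" if "n \<le> N" for n
    using that
  proof (induction n)
    case 0
    have "u 0 = w" unfolding u_def by auto
    then show ?case by simp
  next
    case (Suc n)
    have "\<bar>f (u (Suc n)) - f w\<bar> \<le> \<bar>f (u (Suc n)) - f (u n)\<bar> + \<bar>f (u n) - f w\<bar>" by linarith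
    also have "\<dots> \<le> B n * \<bar>z n - w n\<bar> + (\<Sum>j<n. B j * \<bar>z j - w j\<bar>)"
      using step[of n] Suc by simp
    finally show ?case by simp
  qed
  from this[of N] have "\<bar>f (u N) - f w\<bar> \<le> (\<Sum>j<N. B j * \<bar>z j - w j\<bar>)" by simp
  moreover have "f (u N) = f z" using f unfolding C1_def same_upto_def u_def by auto
  ultimately show ?thesis by simp
qed




lemma tendsto_fun_coord:
  fixes g :: "'a \<Rightarrow> nat \<Rightarrow> real"
  assumes "\<And>i. ((\<lambda>x. g x i) \<longlongrightarrow> l i) F"
  shows "(g \<longlongrightarrow> l) F"
proof -
  have "limitin (product_topology (\<lambda>i. euclidean) UNIV) g l F"
    unfolding limitin_componentwise using assms by simp
  then show ?thesis by (simp add: euclidean_product_topology)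
qed

lemma CR:
  assumes f: "C1 N f" and c: "\<And>j. j < N \<Longrightarrow> ((\<lambda>s. c s j) has_real_derivative d j) (at t)"
  shows "((\<lambda>s. f (c s)) has_real_derivative (\<Sum>j<N. pd j f (c t) * d j)) (at t)"
proof -
  define u where "u s n = (\<lambda>j. if j < n then c s j else c t j)" for s n
  have dep: "\<And>x y. same_upto N x y \<Longrightarrow> f x = f y" using f unfolding C1_def by blast
  have tele: "f (c s) - f (c t) = (\<Sum>n<N. f (u s (Suc n)) - f (u s n))" for s
  proof -
    have "(\<Sum>n<N. f (u s (Suc n)) - f (u s n)) = f (u s N) - f (u s 0)"
      by (rule sum_lessThan_telescope)
    moreover have "f (u s N) = f (c s)" using dep unfolding same_upto_def u_def by auto
    moreover have "u s 0 = c t" unfolding u_def by auto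
    ultimately show ?thesis by simp
  qed
  have ex: "\<exists>\<xi>. f (u s (Suc n)) - f (u s n) = pd n f ((u s n)(n:=\<xi>)) * (c s n - c t n)
            \<and> \<bar>\<xi> - c t n\<bar> \<le> \<bar>c s n - c t n\<bar>" if n: "n < N" for s n
  proof (cases "c s n = c t n")
    case True
    then have "u s (Suc n) = u s n" unfolding u_def by (auto intro!: ext simp: less_Suc_eq)
    then show ?thesis using True by (intro exI[of _ "c t n"]) simp
  next
    case False
    have e1: "u s (Suc n) = (u s n)(n := c s n)" and e2: "u s n = (u s n)(n := c t n)"
      unfolding u_def by (auto intro!: ext)
    have D: "\<And>r. ((\<lambda>r. f ((u s n)(n:=r))) has_real_derivative pd n f ((u s n)(n:=r))) (at r)"
      using C1_D[OF f n] by blast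
    consider "c t n < c s n" | "c s n < c t n" using False by linarith
    then show ?thesis
    proof cases
      case 1
      from MVT2[OF 1, of "\<lambda>r. f ((u s n)(n:=r))" "\<lambda>r. pd n f ((u s n)(n:=r))"] D
      obtain z where "c t n < z" "z < c s n"
        "f ((u s n)(n:=c s n)) - f ((u s n)(n:=c t n)) = (c s n - c t n) * pd n f ((u s n)(n:=z))"
        by blast
      then show ?thesis using e1 e2 by (intro exI[of _ z]) (auto simp: mult.commute)
    next
      case 2
      from MVT2[OF 2, of "\<lambda>r. f ((u s n)(n:=r))" "\<lambda>r. pd n f ((u s n)(n:=r))"] D
      obtain z where "c s n < z" "z < c t n"
        "f ((u s n)(n:=c t n)) - f ((u s n)(n:=c s n)) = (c t n - c s n) * pd n f ((u s n)(n:=z))"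
        by blast
      then show ?thesis using e1 e2 by (intro exI[of _ z]) (auto simp: algebra_simps)
    qed
  qed
  define Pr where "Pr s n z \<longleftrightarrow> f (u s (Suc n)) - f (u s n) = pd n f ((u s n)(n:=z)) * (c s n - c t n)
            \<and> \<bar>z - c t n\<bar> \<le> \<bar>c s n - c t n\<bar>" for s n z
  define \<xi> where "\<xi> s n = (SOME z. Pr s n z)" for s n
  have \<xi>: "f (u s (Suc n)) - f (u s n) = pd n f ((u s n)(n:=\<xi> s n)) * (c s n - c t n)
            \<and> \<bar>\<xi> s n - c t n\<bar> \<le> \<bar>c s n - c t n\<bar>" if "n < N" for s n
  proof -
    have "\<exists>z. Pr s n z" using ex[OF that] unfolding Pr_def .
    then have "Pr s n (\<xi> s n)" unfolding \<xi>_def by (rule someI_ex)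
    then show ?thesis unfolding Pr_def .
  qed
  define p where "p s n = (u s n)(n := \<xi> s n)" for s n
  have ccont: "((\<lambda>s. c s j) \<longlongrightarrow> c t j) (at t)" if "j < N" for j
    using DERIV_isCont[OF c[OF that]] by (simp add: isCont_def)
  have lim_p: "((\<lambda>s. p s n) \<longlongrightarrow> c t) (at t)" if n: "n < N" for n
  proof (rule tendsto_fun_coord)
    fix j
    show "((\<lambda>s. p s n j) \<longlongrightarrow> c t j) (at t)"
    proof (cases "j = n")
      case True
      have "((\<lambda>s. \<bar>c s n - c t n\<bar>) \<longlongrightarrow> 0) (at t)"
        using ccont[OF n] by (simp add: tendsto_rabs_zero Lim_null[symmetric])
      then have "((\<lambda>s. \<xi> s n - c t n) \<longlongrightarrow> 0) (at t)"
        by (rule Lim_null_comparison[rotated]) (use \<xi>[OF n] in auto)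
      then have "((\<lambda>s. \<xi> s n) \<longlongrightarrow> c t n) (at t)" by (simp add: Lim_null[symmetric])
      then show ?thesis using True by (simp add: p_def)
    next
      case False
      show ?thesis
      proof (cases "j < n")
        case True
        then show ?thesis using False ccont[of j] n by (simp add: p_def u_def)
      next
        case F2: False
        then show ?thesis using False by (simp add: p_def u_def)
      qed
    qed
  qed
  have pd_lim: "((\<lambda>s. pd n f (p s n)) \<longlongrightarrow> pd n f (c t)) (at t)" if n: "n < N" for n
  proof -
    have "isCont (pd n f) (c t)"
      using f n unfolding C1_def by (simp add: continuous_on_eq_continuous_at)
    then show ?thesis using lim_p[OF n] by (rule isCont_tendsto_compose)
  qed
  have quot: "((\<lambda>s. (c s n - c t n) / (s - t)) \<longlongrightarrow> d n) (at t)" if n: "n < N" for n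
    using c[OF n] by (simp add: has_field_derivative_iff)
  have L: "((\<lambda>s. \<Sum>n<N. pd n f (p s n) * ((c s n - c t n) / (s - t))) \<longlongrightarrow> (\<Sum>n<N. pd n f (c t) * d n)) (at t)"
    by (intro tendsto_sum tendsto_mult pd_lim quot) auto
  have eq: "(\<Sum>n<N. pd n f (p s n) * ((c s n - c t n) / (s - t))) = (f (c s) - f (c t)) / (s - t)" for s
  proof -
    have "(f (c s) - f (c t)) / (s - t) = (\<Sum>n<N. f (u s (Suc n)) - f (u s n)) / (s - t)" by (simp add: tele)
    also have "\<dots> = (\<Sum>n<N. (f (u s (Suc n)) - f (u s n)) / (s - t))" by (simp add: sum_divide_distrib)
    also have "\<dots> = (\<Sum>n<N. pd n f (p s n) * ((c s n - c t n) / (s - t)))"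
      by (rule sum.cong) (auto simp: \<xi> p_def)
    finally show ?thesis by simp
  qed
  have EQ: "(\<lambda>s. (f (c s) - f (c t)) / (s - t)) = (\<lambda>s. \<Sum>n<N. pd n f (p s n) * ((c s n - c t n) / (s - t)))"
    by (rule ext) (rule eq[symmetric])
  show ?thesis unfolding has_field_derivative_iff EQ by (rule L)
qed




lemma cont_X:
  "continuous_on UNIV (\<lambda>p::real\<times>real. (x(j := fst p, k := snd p)) :: nat \<Rightarrow> real)"
  apply (intro continuous_on_coordinatewise_then_product)
  subgoal for i by (cases "i = k"; cases "i = j") (auto intro!: continuous_intros)
  done

lemma SW:
  assumes f: "C1 N f" and fj: "C1 N (pd j f)" and fk: "C1 N (pd k f)"
    and jk: "j < N" "k < N" "j \<noteq> k"
  shows "pd k (pd j f) x = pd j (pd k f) x"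
proof (rule ccontr)
  assume ne: "pd k (pd j f) x \<noteq> pd j (pd k f) x"
  define X where "X s r = x(j := s, k := r)" for s r
  have Xj: "(X s r)(j := t) = X t r" for s r t using jk unfolding X_def by (auto intro!: ext)
  have Xk: "(X s r)(k := t) = X s t" for s r t using jk unfolding X_def by (auto intro!: ext)
  define a where "a = x j"
  define b where "b = x k"
  have Xab: "X a b = x" unfolding X_def a_def b_def by auto
  define A where "A s r = pd k (pd j f) (X s r)" for s r
  define B where "B s r = pd j (pd k f) (X s r)" for s r
  have d1: "((\<lambda>s. f (X s r)) has_real_derivative pd j f (X s r)) (at s)" for s r
    using C1_D[OF f jk(1), of "X 0 r" s] by (simp add: Xj)
  have d2: "((\<lambda>r. f (X s r)) has_real_derivative pd k f (X s r)) (at r)" for s r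
    using C1_D[OF f jk(2), of "X s 0" r] by (simp add: Xk)
  have dA: "((\<lambda>r. pd j f (X s r)) has_real_derivative A s r) (at r)" for s r
    using C1_D[OF fj jk(2), of "X s 0" r] by (simp add: Xk A_def)
  have dB: "((\<lambda>s. pd k f (X s r)) has_real_derivative B s r) (at s)" for s r
    using C1_D[OF fk jk(1), of "X 0 r" s] by (simp add: Xj B_def)
  have cA: "continuous_on UNIV (\<lambda>p. A (fst p) (snd p))"
  proof -
    have "continuous_on UNIV (pd k (pd j f))" using fj jk unfolding C1_def by blast
    then show ?thesis unfolding A_def X_def
      by (rule continuous_on_compose2[OF _ cont_X]) auto
  qed
  have cB: "continuous_on UNIV (\<lambda>p. B (fst p) (snd p))"
  proof -
    have "continuous_on UNIV (pd j (pd k f))" using fk jk unfolding C1_def by blast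
    then show ?thesis unfolding B_def X_def
      by (rule continuous_on_compose2[OF _ cont_X]) auto
  qed
  define e where "e = \<bar>A a b - B a b\<bar> / 2"
  have e0: "e > 0" using ne Xab unfolding e_def A_def B_def by auto
  obtain dA' where dA': "dA' > 0" "\<And>p. dist p (a, b) < dA' \<Longrightarrow> dist (A (fst p) (snd p)) (A a b) < e"
    using cA e0 unfolding continuous_on_iff by (metis UNIV_I fst_conv snd_conv)
  obtain dB' where dB': "dB' > 0" "\<And>p. dist p (a, b) < dB' \<Longrightarrow> dist (B (fst p) (snd p)) (B a b) < e"
    using cB e0 unfolding continuous_on_iff by (metis UNIV_I fst_conv snd_conv)
  define h where "h = min dA' dB' / 2"
  have h0: "h > 0" using dA' dB' unfolding h_def by auto
  have close: "dist (s, r) (a, b) < min dA' dB'" if "a < s" "s < a + h" "b < r" "r < b + h" for s r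
  proof -
    have "dist (s, r) (a, b) \<le> \<bar>s - a\<bar> + \<bar>r - b\<bar>"
      unfolding dist_Pair_Pair dist_real_def using sqrt_sum_squares_le_sum_abs[of "\<bar>s - a\<bar>" "\<bar>r - b\<bar>"] by simp
    also have "\<dots> < 2 * h" using that by auto
    finally show ?thesis unfolding h_def by simp
  qed
  define \<Delta> where "\<Delta> = f (X (a+h) (b+h)) - f (X (a+h) b) - f (X a (b+h)) + f (X a b)"
  have hh: "a < a + h" "b < b + h" using h0 by auto
  have dd1: "((\<lambda>s. f (X s (b+h)) - f (X s b)) has_real_derivative pd j f (X s (b+h)) - pd j f (X s b)) (at s)" for s
    by (rule DERIV_diff[OF d1 d1])
  have dd2: "((\<lambda>r. f (X (a+h) r) - f (X a r)) has_real_derivative pd k f (X (a+h) r) - pd k f (X a r)) (at r)" for r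
    by (rule DERIV_diff[OF d2 d2])
  obtain \<xi> where \<xi>: "a < \<xi>" "\<xi> < a + h"
    "(f (X (a+h) (b+h)) - f (X (a+h) b)) - (f (X a (b+h)) - f (X a b))
      = (a + h - a) * (pd j f (X \<xi> (b+h)) - pd j f (X \<xi> b))"
    using MVT2[OF hh(1), of "\<lambda>s. f (X s (b+h)) - f (X s b)" "\<lambda>s. pd j f (X s (b+h)) - pd j f (X s b)"] dd1 by blast
  obtain \<eta> where \<eta>: "b < \<eta>" "\<eta> < b + h"
    "pd j f (X \<xi> (b+h)) - pd j f (X \<xi> b) = (b + h - b) * A \<xi> \<eta>"
    using MVT2[of b "b+h" "\<lambda>r. pd j f (X \<xi> r)" "A \<xi>"] h0 dA by auto
  have D1: "\<Delta> = h * h * A \<xi> \<eta>" using \<xi> \<eta> unfolding \<Delta>_def by (simp add: algebra_simps)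
  obtain \<eta>' where \<eta>': "b < \<eta>'" "\<eta>' < b + h"
    "(f (X (a+h) (b+h)) - f (X a (b+h))) - (f (X (a+h) b) - f (X a b))
      = (b + h - b) * (pd k f (X (a+h) \<eta>') - pd k f (X a \<eta>'))"
    using MVT2[OF hh(2), of "\<lambda>r. f (X (a+h) r) - f (X a r)" "\<lambda>r. pd k f (X (a+h) r) - pd k f (X a r)"] dd2 by blast
  obtain \<xi>' where \<xi>': "a < \<xi>'" "\<xi>' < a + h"
    "pd k f (X (a+h) \<eta>') - pd k f (X a \<eta>') = (a + h - a) * B \<xi>' \<eta>'"
    using MVT2[of a "a+h" "\<lambda>s. pd k f (X s \<eta>')" "\<lambda>s. B s \<eta>'"] h0 dB by auto
  have D2: "\<Delta> = h * h * B \<xi>' \<eta>'" using \<xi>' \<eta>' unfolding \<Delta>_def by (simp add: algebra_simps)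
  have AB: "A \<xi> \<eta> = B \<xi>' \<eta>'" using D1 D2 h0 by simp
  have "dist (A \<xi> \<eta>) (A a b) < e" using dA'(2)[of "(\<xi>, \<eta>)"] close[of \<xi> \<eta>] \<xi> \<eta> by auto
  moreover have "dist (B \<xi>' \<eta>') (B a b) < e" using dB'(2)[of "(\<xi>', \<eta>')"] close[of \<xi>' \<eta>'] \<xi>' \<eta>' by auto
  ultimately have "\<bar>A a b - B a b\<bar> < 2 * e" using AB unfolding dist_real_def by linarith
  then show False unfolding e_def by simp
qed




lemma DD:
  fixes A :: "nat \<Rightarrow> nat \<Rightarrow> real" and v :: "nat \<Rightarrow> real"
  assumes S: "finite S" and diag: "\<And>m. m \<in> S \<Longrightarrow> kap \<le> \<bar>A m m\<bar>"
    and off: "\<And>m j. m \<in> S \<Longrightarrow> j \<in> S \<Longrightarrow> j \<noteq> m \<Longrightarrow> \<bar>A m j\<bar> \<le> e"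
    and eq: "\<And>m. m \<in> S \<Longrightarrow> \<bar>\<Sum>j\<in>S. A m j * v j\<bar> \<le> r"
    and k: "kap - real (card S) * e \<ge> 1" and e: "e \<ge> 0"
    and m: "m \<in> S"
  shows "\<bar>v m\<bar> \<le> r"
proof -
  define M where "M = Max ((\<lambda>j. \<bar>v j\<bar>) ` S)"
  have SN: "S \<noteq> {}" using m by auto
  have Mge: "\<bar>v j\<bar> \<le> M" if "j \<in> S" for j unfolding M_def using S that by auto
  have "M \<in> (\<lambda>j. \<bar>v j\<bar>) ` S" unfolding M_def using S SN by (intro Max_in) auto
  then obtain m0 where m0: "m0 \<in> S" "M = \<bar>v m0\<bar>" by auto
  have M0: "M \<ge> 0" using m0 by simp
  have split: "(\<Sum>j\<in>S. A m0 j * v j) = A m0 m0 * v m0 + (\<Sum>j\<in>S - {m0}. A m0 j * v j)"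
    using S m0 by (simp add: sum.remove)
  have "\<bar>\<Sum>j\<in>S - {m0}. A m0 j * v j\<bar> \<le> (\<Sum>j\<in>S - {m0}. e * M)"
  proof -
    have "\<bar>\<Sum>j\<in>S - {m0}. A m0 j * v j\<bar> \<le> (\<Sum>j\<in>S - {m0}. \<bar>A m0 j * v j\<bar>)" by (rule sum_abs)
    also have "\<dots> \<le> (\<Sum>j\<in>S - {m0}. e * M)"
    proof (rule sum_mono)
      fix j assume j: "j \<in> S - {m0}"
      have "\<bar>A m0 j\<bar> * \<bar>v j\<bar> \<le> e * M"
        by (rule mult_mono) (use off[of m0 j] m0 j Mge[of j] e in auto)
      then show "\<bar>A m0 j * v j\<bar> \<le> e * M" by (simp add: abs_mult)
    qed
    finally show ?thesis .
  qed
  also have "\<dots> \<le> real (card S) * e * M"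
  proof -
    have "(\<Sum>j\<in>S - {m0}. e * M) = real (card (S - {m0})) * (e * M)" by simp
    also have "\<dots> \<le> real (card S) * (e * M)"
      by (rule mult_right_mono) (use S e M0 card_Diff1_le[of S m0] in auto)
    finally show ?thesis by simp
  qed
  finally have off_sum: "\<bar>\<Sum>j\<in>S - {m0}. A m0 j * v j\<bar> \<le> real (card S) * e * M" .
  have "kap * M \<le> \<bar>A m0 m0\<bar> * M" by (rule mult_right_mono[OF diag[OF m0(1)] M0])
  also have "\<dots> = \<bar>A m0 m0 * v m0\<bar>" using m0 by (simp add: abs_mult)
  also have "\<dots> \<le> \<bar>\<Sum>j\<in>S. A m0 j * v j\<bar> + \<bar>\<Sum>j\<in>S - {m0}. A m0 j * v j\<bar>" using split by linarith
  also have "\<dots> \<le> r + real (card S) * e * M" using eq[OF m0(1)] off_sum by linarith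
  finally have "(kap - real (card S) * e) * M \<le> r" by (simp add: algebra_simps)
  moreover have "M \<le> (kap - real (card S) * e) * M" using k M0 mult_right_mono[OF k M0] by simp
  ultimately show ?thesis using Mge[OF m] by linarith
qed

lemma DS:
  fixes c :: "nat \<Rightarrow> nat \<Rightarrow> real" and v :: "nat \<Rightarrow> real"
  assumes c: "\<And>k j. k < N \<Longrightarrow> j < N \<Longrightarrow> \<bar>c k j\<bar> \<le> b + (if k = p \<and> j = p then K' else 0)"
    and b: "b \<ge> 0" and K': "K' \<ge> 0"
  shows "\<bar>\<Sum>j<N. \<Sum>k<N. c k j * v k * v j\<bar> \<le> b * (\<Sum>j<N. \<bar>v j\<bar>)\<^sup>2 + K' * (v p)\<^sup>2"
proof -
  have "\<bar>\<Sum>j<N. \<Sum>k<N. c k j * v k * v j\<bar> \<le> (\<Sum>j<N. \<Sum>k<N. \<bar>c k j * v k * v j\<bar>)"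
    by (rule order_trans[OF sum_abs sum_mono]) (rule sum_abs)
  also have "\<dots> \<le> (\<Sum>j<N. \<Sum>k<N. (b * (\<bar>v k\<bar> * \<bar>v j\<bar>) + (if k = p \<and> j = p then K' * (\<bar>v k\<bar> * \<bar>v j\<bar>) else 0)))"
  proof (intro sum_mono)
    fix j k assume "j \<in> {..<N}" "k \<in> {..<N}"
    then have "\<bar>c k j\<bar> * (\<bar>v k\<bar> * \<bar>v j\<bar>) \<le> (b + (if k = p \<and> j = p then K' else 0)) * (\<bar>v k\<bar> * \<bar>v j\<bar>)"
      using c by (intro mult_right_mono) auto
    then show "\<bar>c k j * v k * v j\<bar> \<le> b * (\<bar>v k\<bar> * \<bar>v j\<bar>) + (if k = p \<and> j = p then K' * (\<bar>v k\<bar> * \<bar>v j\<bar>) else 0)"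
    proof -
      have "\<bar>c k j * v k * v j\<bar> = \<bar>c k j\<bar> * (\<bar>v k\<bar> * \<bar>v j\<bar>)" by (simp add: abs_mult)
      moreover have "(b + (if k = p \<and> j = p then K' else 0)) * (\<bar>v k\<bar> * \<bar>v j\<bar>)
          = b * (\<bar>v k\<bar> * \<bar>v j\<bar>) + (if k = p \<and> j = p then K' * (\<bar>v k\<bar> * \<bar>v j\<bar>) else 0)"
        by (simp add: algebra_simps)
      ultimately show ?thesis using \<open>\<bar>c k j\<bar> * (\<bar>v k\<bar> * \<bar>v j\<bar>) \<le> _\<close> by linarith
    qed
  qed
  also have "\<dots> = b * (\<Sum>j<N. \<Sum>k<N. \<bar>v k\<bar> * \<bar>v j\<bar>) + (\<Sum>j<N. \<Sum>k<N. (if k = p \<and> j = p then K' * (\<bar>v k\<bar> * \<bar>v j\<bar>) else 0))"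
    by (simp add: sum.distrib sum_distrib_left)
  also have "(\<Sum>j<N. \<Sum>k<N. \<bar>v k\<bar> * \<bar>v j\<bar>) = (\<Sum>j<N. \<bar>v j\<bar>)\<^sup>2"
    by (simp add: power2_eq_square sum_product mult.commute)
  also have "(\<Sum>j<N. \<Sum>k<N. (if k = p \<and> j = p then K' * (\<bar>v k\<bar> * \<bar>v j\<bar>) else 0)) \<le> K' * (v p)\<^sup>2"
  proof -
    have "(\<Sum>j<N. \<Sum>k<N. (if k = p \<and> j = p then K' * (\<bar>v k\<bar> * \<bar>v j\<bar>) else 0))
        = (\<Sum>j<N. if j = p \<and> p < N then K' * (\<bar>v p\<bar> * \<bar>v p\<bar>) else 0)"
      by (rule sum.cong) (auto simp: sum.delta' if_distrib cong: if_cong)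
    also have "\<dots> = (if p < N then K' * (\<bar>v p\<bar> * \<bar>v p\<bar>) else 0)" by (simp add: sum.delta')
    also have "\<dots> \<le> K' * (v p)\<^sup>2" using K' by (simp add: power2_eq_square abs_mult_self_eq)
    finally show ?thesis .
  qed
  finally show ?thesis by simp
qed

lemma DSsplit:
  fixes c :: "nat \<Rightarrow> nat \<Rightarrow> real" and v :: "nat \<Rightarrow> real"
  assumes p: "p < N"
  shows "(\<Sum>j<N. \<Sum>k<N. c k j * v k * v j)
    = c p p * v p * v p + (\<Sum>j<N. \<Sum>k<N. (if k = p \<and> j = p then 0 else c k j) * v k * v j)"
proof -
  define A where "A = c p p * v p * v p"
  have "(\<Sum>j<N. \<Sum>k<N. c k j * v k * v j)
     = (\<Sum>j<N. \<Sum>k<N. (if k = p \<and> j = p then A else 0)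
         + (if k = p \<and> j = p then 0 else c k j) * v k * v j)"
    unfolding A_def by (intro sum.cong refl) auto
  also have "\<dots> = (\<Sum>j<N. \<Sum>k<N. (if k = p \<and> j = p then A else 0))
      + (\<Sum>j<N. \<Sum>k<N. (if k = p \<and> j = p then 0 else c k j) * v k * v j)"
    by (simp add: sum.distrib)
  also have "(\<Sum>j<N. \<Sum>k<N. (if k = p \<and> j = p then A else 0)) = A"
  proof -
    have "(\<Sum>k<N. (if k = p \<and> j = p then A else 0)) = (if j = p then A else 0)" for j
      using p by (cases "j = p") auto
    then show ?thesis using p by simp
  qed
  finally show ?thesis unfolding A_def .
qed




lemma main:
  fixes E \<kappa> K :: real
  assumes kE: "\<kappa> - E > 1" and N3: "N \<ge> 3" and NE: "E < real N"
    and h1: "H1 N E \<kappa> F" and h2: "H2 N E K F" and i: "i < N" and P: "Phi_lift N F i P"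
  shows "dC2 (\<lambda>t. F (P (x(i := t))) i) (\<lambda>t. F (x(i := t)) i)
          \<le> ereal (E * ((1+E)\<^sup>2 + 2*E + E*(1+E)\<^sup>2 + E*\<bar>K\<bar>) / real N)"
proof -
  define e where "e = E / real N"
  have Npos: "real N > 0" using N3 by simp
  define Fc where "Fc m = (\<lambda>z. F z m)" for m
  have Fc_eq: "(\<lambda>z. F z m) = Fc m" for m by (simp add: Fc_def)
  note h1u = h1[unfolded H1_def]
  note h2u = h2[unfolded H2_def]
  have h2a: "torus_map_lift N 3 F" using h2u by (rule conjunct1)
  have h2b: "\<forall>i<N. \<forall>x. \<bar>pd i (pd i (\<lambda>z. F z i)) x\<bar> \<le> K" using h2u by (elim conjE)
  have h2c: "\<forall>i<N. \<forall>j<N. \<forall>k<N. \<forall>x. j \<noteq> i \<longrightarrow>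
        \<bar>pd k (pd j (\<lambda>z. F z i)) x\<bar> \<le> E / real N" using h2u by (elim conjE)
  have h2e: "\<forall>l<N. \<forall>j<N. \<forall>k<N. \<forall>x. l \<noteq> j \<and> l \<noteq> k \<and> j \<noteq> k \<longrightarrow>
        \<bar>pd l (pd j (pd j (\<lambda>z. F z j))) x\<bar> \<le> E / real N \<and>
        \<bar>pd l (pd k (pd j (\<lambda>z. F z j))) x\<bar> \<le> E / (real N)\<^sup>2" using h2u by (elim conjE)
  have h1b: "\<forall>i<N. \<forall>x. \<bar>pd i (\<lambda>z. F z i) x\<bar> > \<kappa>" using h1u by (elim conjE)
  have h1c: "\<forall>i<N. \<forall>j<N. \<forall>x. j \<noteq> i \<longrightarrow> \<bar>pd j (\<lambda>z. F z i) x\<bar> < E / real N" using h1u by (elim conjE)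
  have CkF: "Ck N 3 (Fc m)" if "m < N" for m
  proof -
    have "\<forall>m<N. Ck N 3 (\<lambda>x. F x m)" using h2a unfolding torus_map_lift_def by (rule conjunct1)
    then show ?thesis using that unfolding Fc_def by simp
  qed
  have diag: "\<kappa> < \<bar>pd m (Fc m) z\<bar>" if "m < N" for m z
    using h1b that unfolding Fc_def by simp
  have off: "\<bar>pd j (Fc m) z\<bar> < e" if "m < N" "j < N" "j \<noteq> m" for m j z
    using h1c that unfolding Fc_def e_def by simp
  have E0: "E > 0"
  proof -
    define j where "j = (if i = 0 then 1 else (0::nat))"
    have "j < N" "j \<noteq> i" using N3 unfolding j_def by auto
    then have "0 \<le> \<bar>pd j (Fc i) x\<bar>" "\<bar>pd j (Fc i) x\<bar> < e" using off[of i j x] i by auto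
    then have "e > 0" by linarith
    then show ?thesis using Npos unfolding e_def by (simp add: zero_less_divide_iff)
  qed
  have e0: "e > 0" "e < 1" using E0 Npos NE unfolding e_def by auto
  have Ne: "real N * e = E" unfolding e_def using Npos by simp
  have K2: "\<bar>pd m (pd m (Fc m)) z\<bar> \<le> K" if "m < N" for m z
    using h2b that unfolding Fc_def by simp
  have K0: "K \<ge> 0" using K2[OF i, of x] by linarith
  have T2: "\<bar>pd k (pd j (Fc m)) z\<bar> \<le> e" if "m < N" "j < N" "k < N" "j \<noteq> m" for m j k z
    using h2c that unfolding Fc_def e_def by simp
  have T3: "\<bar>pd l (pd j (pd j (Fc j))) z\<bar> \<le> e" if "l < N" "j < N" "l \<noteq> j" for l j z
  proof -
    have "\<exists>k\<in>{0,1,2::nat}. k \<noteq> l \<and> k \<noteq> j" using that by auto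
    then obtain k where k0: "k \<in> {0,1,2::nat}" "k \<noteq> l" "k \<noteq> j" by blast
    then have k: "k < N" "k \<noteq> l" "k \<noteq> j" using N3 by auto
    then show ?thesis using h2e that unfolding Fc_def e_def by simp
  qed
  have CF: "C1 N (Fc m)" if "m < N" for m
    using Ck_C1[OF CkF[OF that], of "[]"] by simp
  have CF1: "C1 N (pd j (Fc m))" if "m < N" "j < N" for m j
    using Ck_C1[OF CkF[OF that(1)], of "[j]"] that by simp
  have CF2: "C1 N (pd k (pd j (Fc m)))" if "m < N" "j < N" "k < N" for m j k
    using Ck_C1[OF CkF[OF that(1)], of "[k,j]"] that by simp
  have symm: "pd k (pd j (Fc m)) z = pd j (pd k (Fc m)) z" if "m < N" "j < N" "k < N" for m j k z
  proof (cases "j = k")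
    case False
    then show ?thesis using SW[OF CF[OF that(1)] CF1[OF that(1,2)] CF1[OF that(1,3)]] that by blast
  qed simp
  have B2: "\<bar>pd k (pd j (Fc m)) z\<bar> \<le> e + (if k = m \<and> j = m then K else 0)"
    if "m < N" "j < N" "k < N" for m j k z
  proof (cases "j = m")
    case False
    then show ?thesis using T2[OF that False] K0 by simp
  next
    case True
    show ?thesis
    proof (cases "k = m")
      case True
      then show ?thesis using K2[OF that(1), of z] \<open>j = m\<close> e0 by simp
    next
      case False
      have "\<bar>pd j (pd k (Fc m)) z\<bar> \<le> e" using T2[OF that(1) that(3) that(2) False] .
      then show ?thesis using symm[OF that] False by simp
    qed
  qed
  have CkP: "Ck N 2 (\<lambda>z. P z m)" if "m < N" for m
    using P that unfolding Phi_lift_def torus_map_lift_def by simp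
  have CP: "C1 N (\<lambda>z. P z m)" if "m < N" for m
    using Ck_C1[OF CkP[OF that], of "[]"] by simp
  have CP1: "C1 N (pd i (\<lambda>z. P z m))" if "m < N" for m
    using Ck_C1[OF CkP[OF that], of "[i]"] i by simp
  define g where "g t = P (x(i := t))" for t
  define Q1 where "Q1 m t = pd i (\<lambda>z. P z m) (x(i := t))" for m t
  define Q2 where "Q2 m t = pd i (pd i (\<lambda>z. P z m)) (x(i := t))" for m t
  have dQ: "((\<lambda>s. g s m) has_real_derivative Q1 m t) (at t)" if "m < N" for m t
    using C1_D[OF CP[OF that] i, of x t] unfolding g_def Q1_def .
  have dQ1: "((\<lambda>s. Q1 m s) has_real_derivative Q2 m t) (at t)" if "m < N" for m t
    using C1_D[OF CP1[OF that] i, of x t] unfolding Q1_def Q2_def .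
  have gi: "g t i = t" for t using P unfolding Phi_lift_def g_def by simp
  have Q1i: "Q1 i t = 1" for t
  proof -
    have "((\<lambda>s. g s i) has_real_derivative 1) (at t)" unfolding gi by simp
    then show ?thesis using DERIV_unique dQ[OF i] by blast
  qed
  have Q2i: "Q2 i t = 0" for t
  proof -
    have "((\<lambda>s. Q1 i s) has_real_derivative 0) (at t)" unfolding Q1i by simp
    then show ?thesis using DERIV_unique dQ1[OF i] by blast
  qed
  define S1 where "S1 m t = (\<Sum>j<N. pd j (Fc m) (g t) * Q1 j t)" for m t
  define S2 where "S2 m t = (\<Sum>j<N. (\<Sum>k<N. pd k (pd j (Fc m)) (g t) * Q1 k t) * Q1 j t
                                    + Q2 j t * pd j (Fc m) (g t))" for m t
  have dS1: "((\<lambda>t. Fc m (g t)) has_real_derivative S1 m t) (at t)" if "m < N" for m t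
    unfolding S1_def by (rule CR[OF CF[OF that]]) (rule dQ)
  have dS2: "((\<lambda>t. S1 m t) has_real_derivative S2 m t) (at t)" if "m < N" for m t
    unfolding S1_def S2_def
  proof (rule DERIV_sum)
    fix j assume "j \<in> {..<N}"
    then have j: "j < N" by simp
    have "((\<lambda>t. pd j (Fc m) (g t)) has_real_derivative (\<Sum>k<N. pd k (pd j (Fc m)) (g t) * Q1 k t)) (at t)"
      by (rule CR[OF CF1[OF that j]]) (rule dQ)
    then show "((\<lambda>t. pd j (Fc m) (g t) * Q1 j t) has_real_derivative
       (\<Sum>k<N. pd k (pd j (Fc m)) (g t) * Q1 k t) * Q1 j t + Q2 j t * pd j (Fc m) (g t)) (at t)"
      by (rule DERIV_mult[OF _ dQ1[OF j]])
  qed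
  have S1z: "S1 m t = 0" if "m < N" "m \<noteq> i" for m t
  proof -
    have "Fc m (g s) = Fc m (x(i := 0))" for s
      using P that unfolding Phi_lift_def g_def Fc_def by auto
    then have "((\<lambda>t. Fc m (g t)) has_real_derivative 0) (at t)" by simp
    then show ?thesis using DERIV_unique dS1[OF that(1)] by blast
  qed
  have S2z: "S2 m t = 0" if "m < N" "m \<noteq> i" for m t
  proof -
    have "((\<lambda>t. S1 m t) has_real_derivative 0) (at t)" using S1z[OF that] by simp
    then show ?thesis using DERIV_unique dS2[OF that(1)] by blast
  qed
  define Si where "Si = {..<N} - {i}"
  have Sfin: "finite Si" unfolding Si_def by simp
  have cardS: "real (card Si) * e \<le> E"
  proof -
    have "card Si = N - 1" unfolding Si_def using i by (simp add: card_Diff_singleton)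
    then have "real (card Si) \<le> real N" by simp
    then have "real (card Si) * e \<le> real N * e" using e0 by (intro mult_right_mono) auto
    then show ?thesis using Ne by simp
  qed
  have split: "(\<Sum>j<N. h j) = h i + (\<Sum>j\<in>Si. h j)" for h :: "nat \<Rightarrow> real"
    unfolding Si_def using i by (simp add: sum.remove)
  have SiD: "j < N" "j \<noteq> i" if "j \<in> Si" for j using that unfolding Si_def by auto
  have kap: "\<kappa> - real (card Si) * e \<ge> 1" using cardS kE by linarith
  have bQ1: "\<bar>Q1 j t\<bar> \<le> e" if "j \<in> Si" for j t
  proof (rule DD[of Si \<kappa> "\<lambda>m j. pd j (Fc m) (g t)" e "\<lambda>j. Q1 j t" e, OF Sfin _ _ _ kap _ that])
    fix m assume m: "m \<in> Si"
    show "\<kappa> \<le> \<bar>pd m (Fc m) (g t)\<bar>" using diag[of m] SiD[OF m] by (simp add: less_imp_le)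
    have "0 = S1 m t" using S1z SiD[OF m] by simp
    also have "\<dots> = pd i (Fc m) (g t) + (\<Sum>j\<in>Si. pd j (Fc m) (g t) * Q1 j t)"
      unfolding S1_def split by (simp add: Q1i)
    finally have "(\<Sum>j\<in>Si. pd j (Fc m) (g t) * Q1 j t) = - pd i (Fc m) (g t)" by linarith
    then show "\<bar>\<Sum>j\<in>Si. pd j (Fc m) (g t) * Q1 j t\<bar> \<le> e"
      using off[of m i "g t"] SiD[OF m] i by simp
  next
    fix m j assume "m \<in> Si" "j \<in> Si" "j \<noteq> m"
    then show "\<bar>pd j (Fc m) (g t)\<bar> \<le> e" using off[of m j] SiD by (simp add: less_imp_le)
  qed (use e0 in auto)
  have sumQ1: "(\<Sum>j<N. \<bar>Q1 j t\<bar>) \<le> 1 + E" for t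
  proof -
    have "(\<Sum>j\<in>Si. \<bar>Q1 j t\<bar>) \<le> (\<Sum>j\<in>Si. e)" by (rule sum_mono) (rule bQ1)
    also have "\<dots> = real (card Si) * e" by simp
    finally show ?thesis unfolding split using Q1i cardS by simp
  qed
  define R2 where "R2 = e * (1+E)\<^sup>2 + K * e"
  have R20: "R2 \<ge> 0" unfolding R2_def using e0 K0 by simp
  have bW: "\<bar>\<Sum>j<N. \<Sum>k<N. pd k (pd j (Fc m)) (g t) * Q1 k t * Q1 j t\<bar> \<le> R2" if m: "m < N" "m \<noteq> i" for m t
  proof -
    have "\<bar>\<Sum>j<N. \<Sum>k<N. pd k (pd j (Fc m)) (g t) * Q1 k t * Q1 j t\<bar>
        \<le> e * (\<Sum>j<N. \<bar>Q1 j t\<bar>)\<^sup>2 + K * (Q1 m t)\<^sup>2"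
      by (rule DS) (use B2 m e0 K0 in auto)
    also have "\<dots> \<le> e * (1+E)\<^sup>2 + K * e"
    proof (rule add_mono)
      show "e * (\<Sum>j<N. \<bar>Q1 j t\<bar>)\<^sup>2 \<le> e * (1 + E)\<^sup>2"
        using sumQ1[of t] e0 by (intro mult_left_mono power_mono) auto
      have "\<bar>Q1 m t\<bar> \<le> e" using bQ1[of m t] m unfolding Si_def by simp
      then have "(Q1 m t)\<^sup>2 \<le> e\<^sup>2" by (metis abs_ge_zero power2_abs power_mono)
      also have "\<dots> \<le> e" using e0 by (simp add: power2_eq_square mult_le_cancel_right1 less_imp_le)
      finally show "K * (Q1 m t)\<^sup>2 \<le> K * e" using K0 by (intro mult_left_mono) auto
    qed
    finally show ?thesis unfolding R2_def .
  qed
  have bQ2: "\<bar>Q2 j t\<bar> \<le> R2" if "j \<in> Si" for j t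
  proof (rule DD[of Si \<kappa> "\<lambda>m j. pd j (Fc m) (g t)" e "\<lambda>j. Q2 j t" R2, OF Sfin _ _ _ kap _ that])
    fix m assume m: "m \<in> Si"
    show "\<kappa> \<le> \<bar>pd m (Fc m) (g t)\<bar>" using diag[of m] SiD[OF m] by (simp add: less_imp_le)
    have "0 = S2 m t" using S2z SiD[OF m] by simp
    also have "\<dots> = (\<Sum>j<N. \<Sum>k<N. pd k (pd j (Fc m)) (g t) * Q1 k t * Q1 j t)
                     + (\<Sum>j\<in>Si. pd j (Fc m) (g t) * Q2 j t)"
    proof -
      have "S2 m t = (\<Sum>j<N. (\<Sum>k<N. pd k (pd j (Fc m)) (g t) * Q1 k t) * Q1 j t)
                     + (\<Sum>j<N. Q2 j t * pd j (Fc m) (g t))"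
        unfolding S2_def by (simp add: sum.distrib)
      also have "(\<Sum>j<N. Q2 j t * pd j (Fc m) (g t)) = (\<Sum>j\<in>Si. pd j (Fc m) (g t) * Q2 j t)"
        unfolding split by (simp add: Q2i mult.commute)
      finally show ?thesis by (simp add: sum_distrib_right)
    qed
    finally have "(\<Sum>j\<in>Si. pd j (Fc m) (g t) * Q2 j t) = - (\<Sum>j<N. \<Sum>k<N. pd k (pd j (Fc m)) (g t) * Q1 k t * Q1 j t)"
      by linarith
    then show "\<bar>\<Sum>j\<in>Si. pd j (Fc m) (g t) * Q2 j t\<bar> \<le> R2"
      using bW[of m t] SiD[OF m] by simp
  next
    fix m j assume "m \<in> Si" "j \<in> Si" "j \<noteq> m"
    then show "\<bar>pd j (Fc m) (g t)\<bar> \<le> e" using off[of m j] SiD by (simp add: less_imp_le)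
  qed (use e0 in auto)
  have Qper: "\<bar>g t m - x m\<bar> \<le> e" if m: "m \<in> Si" for m t
  proof -
    have mN: "m < N" "m \<noteq> i" using SiD[OF m] by auto
    have mvt: "\<bar>g b m - g a m\<bar> \<le> e * \<bar>b - a\<bar>" for a b
      by (rule mvt_bound[of "\<lambda>s. g s m" "Q1 m"]) (use dQ[OF mN(1)] bQ1[OF m] in auto)
    have g1: "g (s + 1) m = g s m" for s
    proof -
      have tor: "\<forall>x j m. j < N \<and> m < N \<longrightarrow> P (x(j := x j + 1)) m - P x m \<in> \<int>"
        using P unfolding Phi_lift_def torus_map_lift_def by blast
      have "P ((x(i := s))(i := (x(i := s)) i + 1)) m - P (x(i := s)) m \<in> \<int>"
        using tor i mN by blast
      then have "g (s + 1) m - g s m \<in> \<int>" unfolding g_def by simp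
      moreover have "\<bar>g (s + 1) m - g s m\<bar> < 1" using mvt[of s "s + 1"] e0 by simp
      ultimately show ?thesis using Ints_nonzero_abs_less1 by fastforce
    qed
    have gn: "g (s + real n) m = g s m" for s n
    proof (induction n)
      case (Suc n)
      have "g (s + real (Suc n)) m = g ((s + real n) + 1) m" by (simp add: algebra_simps)
      then show ?case using g1 Suc by simp
    qed simp
    have gz: "g (s + of_int z) m = g s m" for s z
    proof (cases "z \<ge> 0")
      case True
      then obtain n where "z = int n" using zero_le_imp_eq_int by blast
      then show ?thesis using gn by simp
    next
      case False
      then obtain n where "- z = int n" using zero_le_imp_eq_int[of "- z"] by auto
      then have "z = - int n" by simp
      then show ?thesis using gn[of "s - real n" n] by simp
    qed
    have "g t m = g (frac t) m" using gz[of "frac t" "\<lfloor>t\<rfloor>"] by (simp add: frac_def)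
    moreover have "g 0 m = x m"
    proof -
      have "same_upto N (P (x(i := 0))) (x(i := 0))" using P unfolding Phi_lift_def by blast
      then show ?thesis using mN unfolding same_upto_def g_def by simp
    qed
    moreover have "\<bar>g (frac t) m - g 0 m\<bar> \<le> e"
    proof -
      have "e * frac t \<le> e" using e0 frac_lt_1[of t] by (intro mult_left_le) auto
      then show ?thesis using mvt[of 0 "frac t"] by (simp add: abs_minus_commute)
    qed
    ultimately show ?thesis by simp
  qed
  have close: "\<bar>f (g t) - f (x(i := t))\<bar> \<le> E * e"
    if f: "C1 N f" and fb: "\<And>j u. j < N \<Longrightarrow> j \<noteq> i \<Longrightarrow> \<bar>pd j f u\<bar> \<le> e" for f t
  proof -
    have "\<bar>f (g t) - f (x(i := t))\<bar> \<le> (\<Sum>j<N. e * \<bar>g t j - (x(i := t)) j\<bar>)"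
    proof (rule TM[OF f])
      fix j u assume j: "j < N" "g t j \<noteq> (x(i := t)) j"
      then have "j \<noteq> i" using gi by auto
      then show "\<bar>pd j f u\<bar> \<le> e" using fb j by blast
    qed
    also have "\<dots> \<le> (\<Sum>j<N. e * e)"
    proof (rule sum_mono)
      fix j assume j: "j \<in> {..<N}"
      have "\<bar>g t j - (x(i := t)) j\<bar> \<le> e"
      proof (cases "j = i")
        case True then show ?thesis using gi e0 by simp
      next
        case False then show ?thesis using Qper[of j t] j unfolding Si_def by simp
      qed
      then show "e * \<bar>g t j - (x(i := t)) j\<bar> \<le> e * e" using e0 by (intro mult_left_mono) auto
    qed
    also have "\<dots> = E * e" using Ne by simp
    finally show ?thesis .
  qed
  have Geq: "(\<lambda>t. F (P (x(i := t))) i) = (\<lambda>t. Fc i (g t))" by (simp add: Fc_def g_def)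
  have Heq: "(\<lambda>t. F (x(i := t)) i) = (\<lambda>t. Fc i (x(i := t)))" by (simp add: Fc_def)
  have dG: "deriv (\<lambda>t. Fc i (g t)) = S1 i" using dS1[OF i] by (intro ext DERIV_imp_deriv)
  have ddG: "deriv (S1 i) = S2 i" using dS2[OF i] by (intro ext DERIV_imp_deriv) auto
  have dH: "deriv (\<lambda>t. Fc i (x(i := t))) = (\<lambda>t. pd i (Fc i) (x(i := t)))"
    using C1_D[OF CF[OF i] i, of x] by (intro ext DERIV_imp_deriv)
  have ddH: "deriv (\<lambda>t. pd i (Fc i) (x(i := t))) = (\<lambda>t. pd i (pd i (Fc i)) (x(i := t)))"
    using C1_D[OF CF1[OF i i] i, of x] by (intro ext DERIV_imp_deriv)
  define X where "X = (1+E)\<^sup>2 + 2*E + E*(1+E)\<^sup>2 + E*\<bar>K\<bar>"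
  have goal: "E * X / real N = e * X" unfolding e_def by simp
  have EX: "E \<le> X" "2 * E \<le> X" unfolding X_def using E0 by (auto intro!: add_increasing2 add_nonneg_nonneg)
  have bd0: "\<bar>Fc i (g t) - Fc i (x(i := t)) - 0\<bar> \<le> e * X" for t
  proof -
    have "\<bar>Fc i (g t) - Fc i (x(i := t))\<bar> \<le> E * e" by (rule close[OF CF[OF i]]) (use off i in \<open>simp add: less_imp_le\<close>)
    also have "\<dots> \<le> e * X" using EX e0 by (simp add: mult.commute mult_left_mono)
    finally show ?thesis by simp
  qed
  have sumSi: "\<bar>\<Sum>j\<in>Si. a j * b j\<bar> \<le> E * B" if "\<And>j. j \<in> Si \<Longrightarrow> \<bar>a j\<bar> \<le> e"
    "\<And>j. j \<in> Si \<Longrightarrow> \<bar>b j\<bar> \<le> B" "B \<ge> 0" for a b :: "nat \<Rightarrow> real" and B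
  proof -
    have "\<bar>\<Sum>j\<in>Si. a j * b j\<bar> \<le> (\<Sum>j\<in>Si. \<bar>a j * b j\<bar>)" by (rule sum_abs)
    also have "\<dots> \<le> (\<Sum>j\<in>Si. e * B)"
      by (rule sum_mono) (use that e0 in \<open>auto simp: abs_mult intro!: mult_mono\<close>)
    also have "\<dots> = real (card Si) * e * B" by simp
    also have "\<dots> \<le> E * B" using cardS that(3) by (simp add: mult_right_mono)
    finally show ?thesis .
  qed
  have bd1: "\<bar>S1 i t - pd i (Fc i) (x(i := t))\<bar> \<le> e * X" for t
  proof -
    have "S1 i t = pd i (Fc i) (g t) + (\<Sum>j\<in>Si. pd j (Fc i) (g t) * Q1 j t)"
      unfolding S1_def split by (simp add: Q1i)
    moreover have "\<bar>pd i (Fc i) (g t) - pd i (Fc i) (x(i := t))\<bar> \<le> E * e"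
    proof (rule close[OF CF1[OF i i]])
      fix j u assume "j < N" "j \<noteq> i"
      then show "\<bar>pd j (pd i (Fc i)) u\<bar> \<le> e" using B2[OF i i, of j u] by simp
    qed
    moreover have "\<bar>\<Sum>j\<in>Si. pd j (Fc i) (g t) * Q1 j t\<bar> \<le> E * e"
    proof (rule sumSi)
      fix j assume j: "j \<in> Si"
      show "\<bar>pd j (Fc i) (g t)\<bar> \<le> e" using off[OF i SiD(1)[OF j] SiD(2)[OF j], of "g t"] by simp
      show "\<bar>Q1 j t\<bar> \<le> e" using bQ1[OF j] .
    qed (use e0 in simp)
    ultimately have "\<bar>S1 i t - pd i (Fc i) (x(i := t))\<bar> \<le> 2 * E * e" by linarith
    also have "\<dots> \<le> e * X" using EX e0 by (simp add: mult.commute mult_left_mono)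
    finally show ?thesis .
  qed
  have bd2: "\<bar>S2 i t - pd i (pd i (Fc i)) (x(i := t))\<bar> \<le> e * X" for t
  proof -
    define c where "c k j = pd k (pd j (Fc i)) (g t)" for k j
    have "S2 i t = (\<Sum>j<N. \<Sum>k<N. c k j * Q1 k t * Q1 j t)
                     + (\<Sum>j\<in>Si. pd j (Fc i) (g t) * Q2 j t)"
    proof -
      have "S2 i t = (\<Sum>j<N. (\<Sum>k<N. c k j * Q1 k t) * Q1 j t)
                     + (\<Sum>j<N. Q2 j t * pd j (Fc i) (g t))"
        unfolding S2_def c_def by (simp add: sum.distrib)
      also have "(\<Sum>j<N. Q2 j t * pd j (Fc i) (g t)) = (\<Sum>j\<in>Si. pd j (Fc i) (g t) * Q2 j t)"
        unfolding split by (simp add: Q2i mult.commute)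
      finally show ?thesis by (simp add: sum_distrib_right)
    qed
    also have "(\<Sum>j<N. \<Sum>k<N. c k j * Q1 k t * Q1 j t)
       = c i i + (\<Sum>j<N. \<Sum>k<N. (if k = i \<and> j = i then 0 else c k j) * Q1 k t * Q1 j t)"
      using DSsplit[OF i, of c "\<lambda>k. Q1 k t"] by (simp add: Q1i)
    finally have S2e: "S2 i t = c i i + (\<Sum>j<N. \<Sum>k<N. (if k = i \<and> j = i then 0 else c k j) * Q1 k t * Q1 j t)
                     + (\<Sum>j\<in>Si. pd j (Fc i) (g t) * Q2 j t)" .
    have a1: "\<bar>c i i - pd i (pd i (Fc i)) (x(i := t))\<bar> \<le> E * e"
      unfolding c_def
    proof (rule close[OF CF2[OF i i i]])
      fix j u assume "j < N" "j \<noteq> i"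
      then show "\<bar>pd j (pd i (pd i (Fc i))) u\<bar> \<le> e" using T3[of j i u] i by simp
    qed
    have "\<bar>\<Sum>j<N. \<Sum>k<N. (if k = i \<and> j = i then 0 else c k j) * Q1 k t * Q1 j t\<bar>
        \<le> e * (\<Sum>j<N. \<bar>Q1 j t\<bar>)\<^sup>2 + 0 * (Q1 i t)\<^sup>2"
    proof (rule DS)
      fix k j assume kj: "k < N" "j < N"
      show "\<bar>if k = i \<and> j = i then 0 else c k j\<bar> \<le> e + (if k = i \<and> j = i then 0 else 0)"
        using B2[OF i kj(2) kj(1), of "g t"] e0 unfolding c_def by auto
    qed (use e0 in auto)
    also have "\<dots> \<le> e * (1 + E)\<^sup>2"
      using sumQ1[of t] e0 by (simp, intro mult_left_mono power_mono) auto
    finally have a2: "\<bar>\<Sum>j<N. \<Sum>k<N. (if k = i \<and> j = i then 0 else c k j) * Q1 k t * Q1 j t\<bar> \<le> e * (1 + E)\<^sup>2" .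
    have a3: "\<bar>\<Sum>j\<in>Si. pd j (Fc i) (g t) * Q2 j t\<bar> \<le> E * R2"
    proof (rule sumSi)
      fix j assume j: "j \<in> Si"
      show "\<bar>pd j (Fc i) (g t)\<bar> \<le> e" using off[OF i SiD(1)[OF j] SiD(2)[OF j], of "g t"] by simp
      show "\<bar>Q2 j t\<bar> \<le> R2" using bQ2[OF j] .
    qed (use R20 in simp)
    have "\<bar>S2 i t - pd i (pd i (Fc i)) (x(i := t))\<bar> \<le> E * e + e * (1 + E)\<^sup>2 + E * R2"
      using S2e a1 a2 a3 by linarith
    also have "\<dots> = e * (E + (1 + E)\<^sup>2 + E * (1+E)\<^sup>2 + E * K)" unfolding R2_def by (simp add: algebra_simps)
    also have "\<dots> \<le> e * X"
    proof -
      have "E * K \<le> E * \<bar>K\<bar>" using E0 by (intro mult_left_mono) auto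
      then have "E + (1 + E)\<^sup>2 + E * (1+E)\<^sup>2 + E * K \<le> X" unfolding X_def using E0 by linarith
      then show ?thesis using e0 by (intro mult_left_mono) auto
    qed
    finally show ?thesis .
  qed
  have fin: "dC2 (\<lambda>t. Fc i (g t)) (\<lambda>t. Fc i (x(i := t))) \<le> ereal (e * X)"
    unfolding dC2_def dG ddG dH ddH
  proof (rule order_trans[OF INF_lower[of 0]])
    show "(0::real) \<in> \<int>" by simp
    show "(SUP t. ereal (max \<bar>Fc i (g t) - Fc i (x(i := t)) - 0\<bar>
          (max \<bar>S1 i t - pd i (Fc i) (x(i := t))\<bar> \<bar>S2 i t - pd i (pd i (Fc i)) (x(i := t))\<bar>))) \<le> ereal (e * X)"
    proof (rule SUP_least)
      fix t
      show "ereal (max \<bar>Fc i (g t) - Fc i (x(i := t)) - 0\<bar>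
          (max \<bar>S1 i t - pd i (Fc i) (x(i := t))\<bar> \<bar>S2 i t - pd i (pd i (Fc i)) (x(i := t))\<bar>)) \<le> ereal (e * X)"
        using bd0[of t] bd1[of t] bd2[of t] by simp
    qed
  qed
  then show ?thesis unfolding Geq Heq using goal unfolding X_def by simp
qed

theorem lemma4p3:
  fixes E \<kappa> K :: real
  assumes "\<kappa> - E > 1"
  shows "\<exists>C N0. \<forall>N \<ge> N0. \<forall>F i P.
           H1 N E \<kappa> F \<and> H2 N E K F \<and> i < N \<and> Phi_lift N F i P \<longrightarrow>
           (\<forall>x. dC2 (\<lambda>t. F (P (x(i := t))) i) (\<lambda>t. F (x(i := t)) i) \<le> ereal (C / real N))"
proof (intro exI[of _ "E * ((1+E)\<^sup>2 + 2*E + E*(1+E)\<^sup>2 + E*\<bar>K\<bar>)"] exI[of _ "nat \<lceil>E\<rceil> + 3"] allI impI)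
  fix N :: nat and F :: "(nat \<Rightarrow> real) \<Rightarrow> nat \<Rightarrow> real" and i P x
  assume N: "nat \<lceil>E\<rceil> + 3 \<le> N"
    and h: "H1 N E \<kappa> F \<and> H2 N E K F \<and> i < N \<and> Phi_lift N F i P"
  have N3: "N \<ge> 3" using N by simp
  have "E \<le> real (nat \<lceil>E\<rceil>)" by linarith
  then have NE: "E < real N" using N by linarith
  show "dC2 (\<lambda>t. F (P (x(i := t))) i) (\<lambda>t. F (x(i := t)) i)
          \<le> ereal (E * ((1+E)\<^sup>2 + 2*E + E*(1+E)\<^sup>2 + E*\<bar>K\<bar>) / real N)"
    using main[OF assms N3 NE] h by blast
qed


end
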